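(* Let $n > m \ge 1$ be integers with $n \ge 2m$, let $\mathbb{S} \subseteq \mathbb{R}$, and let $f:\mathbb{S}\to\mathbb{R}^n$ be a function. Let $U=\begin{bmatrix} U_1 & U_2\end{bmatrix}\in\mathbb{R}^{n\times n}$ be an orthogonal matrix with $U_1\in\mathbb{R}^{n\times m}$ and $U_2\in\mathbb{R}^{n\times(n-m)}$ (so $U_1^TU_1=\mathbb{I}_m$, $U_2^TU_2=\mathbb{I}_{n-m}$, $U_1^TU_2=0$), whose columns form a complete basis of the range of $f(\mu)$ for all $\mu\in\mathbb{S}$. Let $P\in\mathbb{R}^{n\times m}$ be a selection operator such that $P^TU_1$ is invertible, and let $\sigma_1\ge\sigma_2\ge\cdots\ge\sigma_m>0$ be the singular values of $P^TU_1$. For $\mu\in\mathbb{S}$ define the masked projection $\tilde f(\mu)=U_1(P^TU_1)^{-1}P^Tf(\mu)$ and the orthogonal projection $\hat f(\mu)=U_1U_1^Tf(\mu)$. Then for every $\mu\in\mathbb{S}$: (i) $\lVert f(\mu)-\tilde f(\mu)\rVert_2^2 \le \left(1+\sum_{i=1}^m \frac{1-\sigma_i^2}{\sigma_i^2}\right)\lVert(\mathbb{I}-U_1U_1^T)f(\mu)\rVert_2^2$; (ii) if $Z_1\in\mathbb{R}^{m\times m}$, $V_1\in\mathbb{R}^{m\times m}$, $V_2\in\mathbb{R}^{(n-m)\times(n-m)}$ are orthogonal matrices with $P^TU_1=Z_1\,\mathrm{diag}(\sigma_1,\dots,\sigma_m)\,V_1^T$ and $P^TU_2=Z_1\begin{bmatrix}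 \mathrm{diag}(\sqrt{1-\sigma_1^2},\dots,\sqrt{1-\sigma_m^2}) & 0\end{bmatrix}V_2^T$ (i.e. $V_2$ is the right singular matrix of $P^TU_2$ arising in the cosine–sine decomposition of the orthogonal matrix $\begin{bmatrix}P & \breve P\end{bmatrix}^T U$, where $\begin{bmatrix}P & \breve P\end{bmatrix}$ is a permutation matrix), and $y:=V_2^TU_2^Tf(\mu)\in\mathbb{R}^{n-m}$, then $$\lVert \tilde f(\mu)-\hat f(\mu)\rVert_2^2=\sum_{i=1}^m \frac{1-\sigma_i^2}{\sigma_i^2}\,y_i^2\le \sum_{i=1}^m \frac{1-\sigma_i^2}{\sigma_i^2}\,\lVert(\mathbb{I}-U_1U_1^T)f(\mu)\rVert_2^2 .$$
   Context: A selection (mask) operator $P\in\mathbb{R}^{n\times m}$ is a matrix whose columns are $m$ distinct columns $e_{j_1},\dots,e_{j_m}$ of the identity matrix $\mathbb{I}_n$, so that $P^Ty=(y_{j_1},\dots,y_{j_m})^T$. $\mathrm{diag}(a_1,\dots,a_m)$ is the diagonal matrix with diagonal entries $a_i$. $\lVert\cdot\rVert_2$ is the Euclidean norm. *)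

theory Defs
  imports "Jordan_Normal_Form.Gauss_Jordan_Elimination" "Jordan_Normal_Form.Char_Poly"
begin

definition selection_op :: "nat \<Rightarrow> nat \<Rightarrow> real mat \<Rightarrow> bool" where
  "selection_op n m P \<longleftrightarrow> P \<in> carrier_mat n m \<and>
     (\<exists>j :: nat \<Rightarrow> nat. inj_on j {0..<m} \<and> (\<forall>i<m. j i < n \<and> col P i = unit_vec n (j i)))"

definition orthogonal_mat :: "nat \<Rightarrow> real mat \<Rightarrow> bool" where
  "orthogonal_mat k Q \<longleftrightarrow> Q \<in> carrier_mat k k \<and> transpose_mat Q * Q = 1\<^sub>m k"

definition singular_values :: "nat \<Rightarrow> real mat \<Rightarrow> (nat \<Rightarrow> real) \<Rightarrow> bool" where
  "singular_values k A \<sigma> \<longleftrightarrow> A \<in> carrier_mat k k \<and>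
     (\<forall>i<k. 0 \<le> \<sigma> i) \<and> (\<forall>i j. i \<le> j \<longrightarrow> j < k \<longrightarrow> \<sigma> j \<le> \<sigma> i) \<and>
     char_poly (transpose_mat A * A) = (\<Prod>i<k. [:- (\<sigma> i)\<^sup>2, 1:])"

definition sqnorm :: "real vec \<Rightarrow> real" where
  "sqnorm v = (\<Sum>i<dim_vec v. (v $ i)\<^sup>2)"

definition minv :: "real mat \<Rightarrow> real mat" where
  "minv A = the (mat_inverse A)"

end

theory Submission
  imports Defs "Jordan_Normal_Form.Schur_Decomposition"
begin

definition tr :: "real mat \<Rightarrow> real" where
  "tr X = (\<Sum>i<dim_row X. X $$ (i,i))"

lemma tr_comm:
  assumes X: "X \<in> carrier_mat k l" and Y: "Y \<in> carrier_mat l k"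
  shows "tr (X * Y) = tr (Y * X)"
proof -
  have "tr (X * Y) = (\<Sum>i<k. \<Sum>j<l. X $$ (i,j) * Y $$ (j,i))"
    using X Y by (simp add: tr_def scalar_prod_def lessThan_atLeast0)
  also have "\<dots> = (\<Sum>j<l. \<Sum>i<k. Y $$ (j,i) * X $$ (i,j))"
    by (subst sum.swap) (simp add: mult.commute)
  also have "\<dots> = tr (Y * X)"
    using X Y by (simp add: tr_def scalar_prod_def lessThan_atLeast0)
  finally show ?thesis .
qed

lemma ut_inv_diag:
  fixes B C :: "real mat"
  assumes B: "B \<in> carrier_mat k k" and ut: "upper_triangular B"
    and nz: "\<forall>i<k. B $$ (i,i) \<noteq> 0" and C: "C \<in> carrier_mat k k" and CB: "C * B = 1\<^sub>m k"
  shows "\<forall>i<k. C $$ (i,i) * B $$ (i,i) = 1"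
proof -
  have Bz: "B $$ (i,j) = 0" if "j < i" "i < k" for i j
    using ut that B unfolding upper_triangular_def by auto
  have e: "(\<Sum>l<k. C $$ (i,l) * B $$ (l,j)) = (if i = j then 1 else 0)" if "i < k" "j < k" for i j
  proof -
    have "(C * B) $$ (i,j) = (\<Sum>l<k. C $$ (i,l) * B $$ (l,j))"
      using that B C by (simp add: scalar_prod_def lessThan_atLeast0)
    then show ?thesis using CB that by simp
  qed
  have sp: "(\<Sum>l<k. C $$ (i,l) * B $$ (l,j)) = (\<Sum>l\<le>j. C $$ (i,l) * B $$ (l,j))" if "j < k" for i j
  proof -
    have "(\<Sum>l<k. C $$ (i,l) * B $$ (l,j)) = (\<Sum>l\<in>{..j}. C $$ (i,l) * B $$ (l,j))"
      by (rule sum.mono_neutral_right) (use that Bz in auto)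
    then show ?thesis by simp
  qed
  have low: "\<forall>j. j < i \<longrightarrow> C $$ (i,j) = 0" if "i < k" for i
  proof (intro allI)
    fix j show "j < i \<longrightarrow> C $$ (i,j) = 0"
    proof (induction j rule: less_induct)
      case (less j)
      show ?case
      proof
        assume ji: "j < i"
        have "(\<Sum>l\<le>j. C $$ (i,l) * B $$ (l,j)) = 0" using e[of i j] sp[of j i] ji that by simp
        moreover have "(\<Sum>l\<le>j. C $$ (i,l) * B $$ (l,j)) = C $$ (i,j) * B $$ (j,j)"
          by (rule sum.mono_neutral_right[symmetric, of "{..j}" "{j}", simplified, symmetric])
           (use less ji in auto)
        moreover have "B $$ (j,j) \<noteq> 0" using nz ji that by auto
        ultimately show "C $$ (i,j) = 0" by simp
      qed
    qed
  qed
  show ?thesis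
  proof (intro allI impI)
    fix i assume i: "i < k"
    have "(\<Sum>l\<le>i. C $$ (i,l) * B $$ (l,i)) = 1" using e[of i i] sp[of i i] i by simp
    moreover have "(\<Sum>l\<le>i. C $$ (i,l) * B $$ (l,i)) = C $$ (i,i) * B $$ (i,i)"
      by (rule sum.mono_neutral_right[symmetric, of "{..i}" "{i}", simplified, symmetric])
        (use low[OF i] in auto)
    ultimately show "C $$ (i,i) * B $$ (i,i) = 1" by simp
  qed
qed
lemma prod_list_upt_conv:
  "(\<Prod>e\<leftarrow>map lam [0..<k]. [:- e, 1:]) = (\<Prod>i<k. [:- lam i, 1:])"
  by (induction k) (auto simp: mult.commute)

lemma tr_inv_char_poly:
  fixes G Gi :: "real mat"
  assumes G: "G \<in> carrier_mat k k" and Gi: "Gi \<in> carrier_mat k k"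
    and GGi: "Gi * G = 1\<^sub>m k"
    and cp: "char_poly G = (\<Prod>i<k. [:- lam i, 1:])"
    and nz: "\<forall>i<k. lam i \<noteq> 0"
  shows "tr Gi = (\<Sum>i<k. 1 / lam i)"
proof -
  obtain B P Q where sd: "schur_decomposition G (map lam [0..<k]) = (B,P,Q)"
    by (cases "schur_decomposition G (map lam [0..<k])") auto
  have cp': "char_poly G = (\<Prod>e\<leftarrow>map lam [0..<k]. [:- e, 1:])"
    by (simp only: cp prod_list_upt_conv)
  from schur_decomposition[OF G cp' sd]
  have sim: "similar_mat_wit G B P Q" and ut: "upper_triangular B"
    and dg: "diag_mat B = map lam [0..<k]" by auto
  from similar_mat_witD2[OF G sim]
  have B: "B \<in> carrier_mat k k" and P: "P \<in> carrier_mat k k" and Q: "Q \<in> carrier_mat k k"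
    and PQ: "P * Q = 1\<^sub>m k" and QP: "Q * P = 1\<^sub>m k" and GPBQ: "G = P * B * Q" by auto
  have Bd: "B $$ (i,i) = lam i" if "i < k" for i
  proof -
    have "diag_mat B ! i = lam i" using dg that by simp
    then show ?thesis using B that by (simp add: diag_mat_def)
  qed
  define Bi where "Bi = Q * Gi * P"
  have Bi: "Bi \<in> carrier_mat k k" using Q Gi P by (simp add: Bi_def)
  have BQGP: "B = Q * G * P"
  proof -
    have "Q * G * P = Q * (P * B * Q) * P" using GPBQ by simp
    also have "\<dots> = (Q * P) * B * (Q * P)"
      using P B Q by (simp add: assoc_mult_mat[of _ k k _ k _ k])
    also have "\<dots> = B" using QP B by simp
    finally show ?thesis by simp
  qed
  have BiB: "Bi * B = 1\<^sub>m k"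
  proof -
    have "Bi * B = Q * Gi * (P * Q) * G * P"
      unfolding Bi_def BQGP using P Q G Gi by (simp add: assoc_mult_mat[of _ k k _ k _ k])
    also have "\<dots> = Q * (Gi * G) * P" using PQ P Q G Gi by (simp add: assoc_mult_mat[of _ k k _ k _ k])
    also have "\<dots> = 1\<^sub>m k" using GGi QP P Q by simp
    finally show ?thesis .
  qed
  from ut_inv_diag[OF B ut _ Bi BiB] Bd nz
  have Bid: "\<forall>i<k. Bi $$ (i,i) = 1 / lam i" by (simp add: field_simps)
  have "tr Gi = tr (Gi * (P * Q))" using PQ Gi by simp
  also have "\<dots> = tr ((Gi * P) * Q)" using Gi P Q by (simp add: assoc_mult_mat[of _ k k _ k _ k])
  also have "\<dots> = tr (Q * (Gi * P))" using Gi P Q by (intro tr_comm[of _ k k]) auto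
  also have "\<dots> = tr Bi" unfolding Bi_def using Gi P Q by (simp add: assoc_mult_mat[of _ k k _ k _ k])
  also have "\<dots> = (\<Sum>i<k. 1 / lam i)" using Bid Bi by (simp add: tr_def)
  finally show ?thesis .
qed

lemma cs_sum:
  fixes a b :: "nat \<Rightarrow> real"
  shows "(\<Sum>i\<in>I. a i * b i)\<^sup>2 \<le> (\<Sum>i\<in>I. (a i)\<^sup>2) * (\<Sum>i\<in>I. (b i)\<^sup>2)"
proof (cases "(\<Sum>i\<in>I. (b i)\<^sup>2) = 0")
  case True
  then have "(\<Sum>i\<in>I. a i * b i) = 0"
  proof (cases "finite I")
    case True
    with \<open>(\<Sum>i\<in>I. (b i)\<^sup>2) = 0\<close> have "\<forall>i\<in>I. b i = 0"
      using sum_nonneg_eq_0_iff[of I "\<lambda>i. (b i)\<^sup>2"] by simp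
    then show ?thesis by simp
  qed simp
  then show ?thesis by (simp add: sum_nonneg)
next
  case False
  define B where "B = (\<Sum>i\<in>I. (b i)\<^sup>2)"
  define S where "S = (\<Sum>i\<in>I. a i * b i)"
  define A where "A = (\<Sum>i\<in>I. (a i)\<^sup>2)"
  have Bp: "B > 0" using False unfolding B_def by (simp add: order_neq_le_trans sum_nonneg)
  define t where "t = S / B"
  have "0 \<le> (\<Sum>i\<in>I. (a i - t * b i)\<^sup>2)" by (simp add: sum_nonneg)
  also have "\<dots> = A - 2 * t * S + t\<^sup>2 * B"
    unfolding A_def B_def S_def
    by (simp add: power2_eq_square algebra_simps sum_distrib_left sum.distrib sum_subtractf)
  also have "\<dots> = A - S\<^sup>2 / B" using Bp by (simp add: t_def power2_eq_square field_simps)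
  finally have "S\<^sup>2 / B \<le> A" by simp
  then have "S\<^sup>2 \<le> A * B" using Bp by (simp add: divide_le_eq)
  then show ?thesis unfolding A_def B_def S_def .
qed

lemma sqnorm_sp: "sqnorm v = v \<bullet> v"
  by (simp add: sqnorm_def scalar_prod_def power2_eq_square lessThan_atLeast0)

lemma sqnorm_nonneg: "0 \<le> sqnorm v"
  by (simp add: sqnorm_def sum_nonneg)

lemma isom:
  fixes W :: "real mat"
  assumes W: "W \<in> carrier_mat p q" and WW: "transpose_mat W * W = 1\<^sub>m q"
    and v: "v \<in> carrier_vec q" and w: "w \<in> carrier_vec q"
  shows "(W *\<^sub>v v) \<bullet> (W *\<^sub>v w) = v \<bullet> w"
proof -
  have "(W *\<^sub>v v) \<bullet> (W *\<^sub>v w) = (transpose_mat W *\<^sub>v (W *\<^sub>v v)) \<bullet> w"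
    using transpose_vec_mult_scalar[OF W w, of "W *\<^sub>v v"] W v by simp
  also have "transpose_mat W *\<^sub>v (W *\<^sub>v v) = v"
    using W v WW by (simp flip: assoc_mult_mat_vec)
  finally show ?thesis .
qed

lemma sqnorm_isom:
  fixes W :: "real mat"
  assumes W: "W \<in> carrier_mat p q" and WW: "transpose_mat W * W = 1\<^sub>m q"
    and v: "v \<in> carrier_vec q"
  shows "sqnorm (W *\<^sub>v v) = sqnorm v"
  using isom[OF W WW v v] by (simp add: sqnorm_sp)

lemma sqnorm_diff_orth:
  fixes u w :: "real vec"
  assumes u: "u \<in> carrier_vec k" and w: "w \<in> carrier_vec k" and o: "u \<bullet> w = 0"
  shows "sqnorm (u - w) = sqnorm u + sqnorm w"
proof -
  have "w \<bullet> u = 0" using o comm_scalar_prod[OF u w] by simp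
  have "(u - w) \<bullet> (u - w) = u \<bullet> u - u \<bullet> w - (w \<bullet> u - w \<bullet> w)"
    using u w by (simp add: minus_scalar_prod_distrib scalar_prod_minus_distrib)
  then show ?thesis using o \<open>w \<bullet> u = 0\<close> by (simp add: sqnorm_sp)
qed

lemma frob:
  fixes M :: "real mat"
  assumes M: "M \<in> carrier_mat p q" and v: "v \<in> carrier_vec q"
  shows "sqnorm (M *\<^sub>v v) \<le> tr (M * transpose_mat M) * sqnorm v"
proof -
  have "sqnorm (M *\<^sub>v v) = (\<Sum>i<p. (\<Sum>j<q. M $$ (i,j) * v $ j)\<^sup>2)"
    using M v by (simp add: sqnorm_def scalar_prod_def lessThan_atLeast0)
  also have "\<dots> \<le> (\<Sum>i<p. (\<Sum>j<q. (M $$ (i,j))\<^sup>2) * (\<Sum>j<q. (v $ j)\<^sup>2))"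
    by (rule sum_mono) (rule cs_sum)
  also have "\<dots> = tr (M * transpose_mat M) * sqnorm v"
    using M v by (simp add: tr_def sqnorm_def scalar_prod_def lessThan_atLeast0 sum_distrib_right power2_eq_square)
  finally show ?thesis .
qed


lemma sum_split_add:
  fixes f :: "nat \<Rightarrow> real"
  shows "(\<Sum>j<m+d. f j) = (\<Sum>j<m. f j) + (\<Sum>j<d. f (j+m))"
  by (induction d) (auto simp: add.commute)

lemma sel_PtP:
  assumes P: "selection_op n m P"
  shows "transpose_mat P * P = 1\<^sub>m m"
proof -
  from P obtain j where Pc: "P \<in> carrier_mat n m" and inj: "inj_on j {0..<m}"
    and jc: "\<forall>i<m. j i < n \<and> col P i = unit_vec n (j i)"
    unfolding selection_op_def by blast
  show ?thesis
  proof (rule eq_matI)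
    fix i k assume i: "i < dim_row (1\<^sub>m m)" and k: "k < dim_col (1\<^sub>m m)"
    then have i: "i < m" and k: "k < m" by auto
    have "(transpose_mat P * P) $$ (i,k) = col P i \<bullet> col P k"
      using Pc i k by simp
    also have "\<dots> = unit_vec n (j i) \<bullet> unit_vec n (j k)" using jc i k by simp
    also have "\<dots> = (if i = k then 1 else 0)"
      using jc i k inj unfolding inj_on_def by auto
    finally show "(transpose_mat P * P) $$ (i,k) = 1\<^sub>m m $$ (i,k)" using i k by simp
  qed (use Pc in auto)
qed

lemma UU_complete:
  fixes U1 U2 :: "real mat"
  assumes U1: "U1 \<in> carrier_mat n m" and U2: "U2 \<in> carrier_mat n (n - m)" and mn: "m \<le> n"
    and o1: "transpose_mat U1 * U1 = 1\<^sub>m m"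
    and o2: "transpose_mat U2 * U2 = 1\<^sub>m (n - m)"
    and o12: "transpose_mat U1 * U2 = 0\<^sub>m m (n - m)"
  shows "U1 * transpose_mat U1 + U2 * transpose_mat U2 = 1\<^sub>m n"
proof -
  define U where "U = mat n n (\<lambda>(i,j). if j < m then U1 $$ (i,j) else U2 $$ (i,j-m))"
  have U: "U \<in> carrier_mat n n" by (simp add: U_def)
  have e1: "(\<Sum>i<n. U1 $$ (i,j) * U1 $$ (i,k)) = (if j = k then 1 else 0)" if "j < m" "k < m" for j k
  proof -
    have "(transpose_mat U1 * U1) $$ (j,k) = (\<Sum>i<n. U1 $$ (i,j) * U1 $$ (i,k))"
      using U1 that by (simp add: scalar_prod_def lessThan_atLeast0)
    then show ?thesis using o1 that by simp
  qed
  have e2: "(\<Sum>i<n. U2 $$ (i,j) * U2 $$ (i,k)) = (if j = k then 1 else 0)" if "j < n - m" "k < n - m" for j k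
  proof -
    have "(transpose_mat U2 * U2) $$ (j,k) = (\<Sum>i<n. U2 $$ (i,j) * U2 $$ (i,k))"
      using U2 that by (simp add: scalar_prod_def lessThan_atLeast0)
    then show ?thesis using o2 that by simp
  qed
  have e12: "(\<Sum>i<n. U1 $$ (i,j) * U2 $$ (i,k)) = 0" if "j < m" "k < n - m" for j k
  proof -
    have "(transpose_mat U1 * U2) $$ (j,k) = (\<Sum>i<n. U1 $$ (i,j) * U2 $$ (i,k))"
      using U1 U2 that by (simp add: scalar_prod_def lessThan_atLeast0)
    then show ?thesis using o12 that by simp
  qed
  have UtU: "transpose_mat U * U = 1\<^sub>m n"
  proof (rule eq_matI)
    fix j k assume "j < dim_row (1\<^sub>m n)" "k < dim_col (1\<^sub>m n)"
    then have j: "j < n" and k: "k < n" by auto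
    have "(transpose_mat U * U) $$ (j,k) = (\<Sum>i<n. U $$ (i,j) * U $$ (i,k))"
      using U j k by (simp add: scalar_prod_def lessThan_atLeast0)
    also have "\<dots> = (if j = k then 1 else 0)"
    proof (cases "j < m"; cases "k < m")
      assume "j < m" "k < m" then show ?thesis using e1 j k by (simp add: U_def)
    next
      assume "j < m" "\<not> k < m" then show ?thesis using e12[of j "k-m"] j k by (simp add: U_def)
    next
      assume "\<not> j < m" "k < m" then show ?thesis using e12[of k "j-m"] j k
        by (simp add: U_def mult.commute)
    next
      assume "\<not> j < m" "\<not> k < m" then show ?thesis using e2[of "j-m" "k-m"] j k
        by (simp add: U_def) linarith
    qed
    finally show "(transpose_mat U * U) $$ (j,k) = 1\<^sub>m n $$ (j,k)" using j k by simp
  qed (use U in auto)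
  have UUt: "U * transpose_mat U = 1\<^sub>m n"
    using mat_mult_left_right_inverse[OF _ U UtU] U by simp
  show ?thesis
  proof (rule eq_matI)
    fix i k assume "i < dim_row (1\<^sub>m n)" "k < dim_col (1\<^sub>m n)"
    then have i: "i < n" and k: "k < n" by auto
    obtain d where d: "n = m + d" using mn le_Suc_ex by blast
    have "(U * transpose_mat U) $$ (i,k) = (\<Sum>j<n. U $$ (i,j) * U $$ (k,j))"
      using U i k by (simp add: scalar_prod_def lessThan_atLeast0)
    also have "\<dots> = (\<Sum>j<m. U $$ (i,j) * U $$ (k,j)) + (\<Sum>j<d. U $$ (i,j+m) * U $$ (k,j+m))"
      unfolding d by (rule sum_split_add)
    also have "\<dots> = (\<Sum>j<m. U1 $$ (i,j) * U1 $$ (k,j)) + (\<Sum>j<d. U2 $$ (i,j) * U2 $$ (k,j))"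
      using i k d by (simp add: U_def)
    also have "\<dots> = (U1 * transpose_mat U1 + U2 * transpose_mat U2) $$ (i,k)"
      using U1 U2 i k d by (simp add: scalar_prod_def lessThan_atLeast0)
    finally show "(U1 * transpose_mat U1 + U2 * transpose_mat U2) $$ (i,k) = 1\<^sub>m n $$ (i,k)"
      using UUt i k by simp
  qed (use U1 U2 in auto)
qed


lemma diag_mult_vec:
  fixes g :: "nat \<Rightarrow> real"
  assumes kq: "k \<le> q" and y: "y \<in> carrier_vec q"
  shows "mat k q (\<lambda>(i,j). if i = j then g i else 0) *\<^sub>v y = vec k (\<lambda>i. g i * y $ i)"
proof (rule eq_vecI)
  fix i assume "i < dim_vec (vec k (\<lambda>i. g i * y $ i))"
  then have i: "i < k" by simp
  have "(mat k q (\<lambda>(i,j). if i = j then g i else 0) *\<^sub>v y) $ i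
      = (\<Sum>j\<in>{0..<q}. (if i = j then g i else 0) * y $ j)"
    using i y kq by (simp add: scalar_prod_def)
  also have "\<dots> = (\<Sum>j\<in>{0..<q}. if j = i then g i * y $ j else 0)"
    by (rule sum.cong) auto
  also have "\<dots> = g i * y $ i" using i kq by simp
  finally show "(mat k q (\<lambda>(i,j). if i = j then g i else 0) *\<^sub>v y) $ i = vec k (\<lambda>i. g i * y $ i) $ i"
    using i by simp
qed simp

lemma sel_contract:
  assumes P: "selection_op n m P" and w: "w \<in> carrier_vec n"
  shows "sqnorm (transpose_mat P *\<^sub>v w) \<le> sqnorm w"
proof -
  from P obtain j where Pc: "P \<in> carrier_mat n m" and inj: "inj_on j {0..<m}"
    and jc: "\<forall>i<m. j i < n \<and> col P i = unit_vec n (j i)"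
    unfolding selection_op_def by blast
  have "sqnorm (transpose_mat P *\<^sub>v w) = (\<Sum>i<m. (w $ j i)\<^sup>2)"
    unfolding sqnorm_def using Pc jc w by simp
  also have "\<dots> = (\<Sum>k\<in>j ` {..<m}. (w $ k)\<^sup>2)"
    using inj by (simp add: sum.reindex lessThan_atLeast0)
  also have "\<dots> \<le> (\<Sum>k<n. (w $ k)\<^sup>2)"
    by (rule sum_mono2) (use jc in auto)
  also have "\<dots> = sqnorm w" using w by (simp add: sqnorm_def)
  finally show ?thesis .
qed

lemma gram_conj:
  fixes X Y :: "real mat"
  assumes X: "X \<in> carrier_mat a b" and Y: "Y \<in> carrier_mat b c"
  shows "(X * Y) * transpose_mat (X * Y) = X * (Y * transpose_mat Y) * transpose_mat X"
proof -
  have "transpose_mat (X * Y) = transpose_mat Y * transpose_mat X"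
    by (rule transpose_mult[OF X Y])
  then have "(X * Y) * transpose_mat (X * Y) = X * Y * (transpose_mat Y * transpose_mat X)" by simp
  also have "\<dots> = X * (Y * (transpose_mat Y * transpose_mat X))"
    by (rule assoc_mult_mat[of X a b Y c _ a]) (use X Y in auto)
  also have "Y * (transpose_mat Y * transpose_mat X) = Y * transpose_mat Y * transpose_mat X"
    by (rule assoc_mult_mat[of Y b c _ b _ a, symmetric]) (use X Y in auto)
  also have "X * (Y * transpose_mat Y * transpose_mat X) = X * (Y * transpose_mat Y) * transpose_mat X"
    by (rule assoc_mult_mat[of X a b _ b _ a, symmetric]) (use X Y in auto)
  finally show ?thesis .
qed

theorem theorem1:
  fixes n m :: nat and S :: "real set" and f :: "real \<Rightarrow> real vec"
    and U1 U2 P :: "real mat" and \<sigma> :: "nat \<Rightarrow> real"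
  assumes "1 \<le> m" and "m < n" and "2 * m \<le> n"
    and f_dim: "\<forall>\<mu>\<in>S. f \<mu> \<in> carrier_vec n"
    and U1: "U1 \<in> carrier_mat n m" and U2: "U2 \<in> carrier_mat n (n - m)"
    and "transpose_mat U1 * U1 = 1\<^sub>m m"
    and "transpose_mat U2 * U2 = 1\<^sub>m (n - m)"
    and "transpose_mat U1 * U2 = 0\<^sub>m m (n - m)"
    and P: "selection_op n m P"
    and inv: "invertible_mat (transpose_mat P * U1)"
    and sv: "singular_values m (transpose_mat P * U1) \<sigma>"
    and sv_pos: "\<forall>i<m. 0 < \<sigma> i"
  shows "\<forall>\<mu>\<in>S.
     (let ft = U1 * minv (transpose_mat P * U1) * transpose_mat P *\<^sub>v f \<mu>;
          fh = U1 * transpose_mat U1 *\<^sub>v f \<mu>;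
          r = sqnorm ((1\<^sub>m n - U1 * transpose_mat U1) *\<^sub>v f \<mu>)
      in sqnorm (f \<mu> - ft) \<le> (1 + (\<Sum>i<m. (1 - (\<sigma> i)\<^sup>2) / (\<sigma> i)\<^sup>2)) * r
       \<and> (\<forall>Z1 V1 V2. orthogonal_mat m Z1 \<and> orthogonal_mat m V1 \<and> orthogonal_mat (n - m) V2
            \<and> transpose_mat P * U1
                = Z1 * mat m m (\<lambda>(i, j). if i = j then \<sigma> i else 0) * transpose_mat V1
            \<and> transpose_mat P * U2
                = Z1 * mat m (n - m) (\<lambda>(i, j). if i = j then sqrt (1 - (\<sigma> i)\<^sup>2) else 0)
                     * transpose_mat V2
            \<longrightarrow> (let y = transpose_mat V2 * transpose_mat U2 *\<^sub>v f \<mu>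
                 in sqnorm (ft - fh) = (\<Sum>i<m. (1 - (\<sigma> i)\<^sup>2) / (\<sigma> i)\<^sup>2 * (y $ i)\<^sup>2)
                  \<and> (\<Sum>i<m. (1 - (\<sigma> i)\<^sup>2) / (\<sigma> i)\<^sup>2 * (y $ i)\<^sup>2)
                      \<le> (\<Sum>i<m. (1 - (\<sigma> i)\<^sup>2) / (\<sigma> i)\<^sup>2) * r)))"
proof -
  note mn = \<open>m < n\<close> \<open>2 * m \<le> n\<close>
  note o1 = \<open>transpose_mat U1 * U1 = 1\<^sub>m m\<close>
  note o2 = \<open>transpose_mat U2 * U2 = 1\<^sub>m (n - m)\<close>
  note o12 = \<open>transpose_mat U1 * U2 = 0\<^sub>m m (n - m)\<close>
  have Pc: "P \<in> carrier_mat n m" using P unfolding selection_op_def by blast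
  have PtP: "transpose_mat P * P = 1\<^sub>m m" by (rule sel_PtP[OF P])
  have UU: "U1 * transpose_mat U1 + U2 * transpose_mat U2 = 1\<^sub>m n"
    using UU_complete[OF U1 U2 _ o1 o2 o12] mn by simp
  define A where "A = transpose_mat P * U1"
  define B where "B = transpose_mat P * U2"
  define Ai where "Ai = minv A"
  have Ac: "A \<in> carrier_mat m m" using Pc U1 by (simp add: A_def)
  have Bc: "B \<in> carrier_mat m (n - m)" using Pc U2 by (simp add: B_def)
  have Ainv: "A * Ai = 1\<^sub>m m \<and> Ai * A = 1\<^sub>m m \<and> Ai \<in> carrier_mat m m"
  proof -
    from inv obtain C where AC: "A * C = 1\<^sub>m (dim_row A)" and CA: "C * A = 1\<^sub>m (dim_row C)"
      unfolding invertible_mat_def inverts_mat_def A_def by blast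
    have "dim_row C = m"
      using arg_cong[OF CA, of dim_col] Ac by simp
    moreover have "dim_col C = m"
      using arg_cong[OF AC, of dim_col] Ac by simp
    ultimately have Cc: "C \<in> carrier_mat m m" by auto
    have "A \<in> Units (ring_mat TYPE(real) m ())"
      unfolding Units_def ring_mat_simps using Ac Cc AC CA by auto
    then have "mat_inverse A \<noteq> None" using mat_inverse(1)[OF Ac, where b="()"] by blast
    then obtain D where D: "mat_inverse A = Some D" by blast
    then have "Ai = D" by (simp add: Ai_def minv_def)
    then show ?thesis using mat_inverse(2)[OF Ac D] by simp
  qed
  then have AAi: "A * Ai = 1\<^sub>m m" and AiA: "Ai * A = 1\<^sub>m m" and Aic: "Ai \<in> carrier_mat m m"
    by auto
  have ABt: "A * transpose_mat A + B * transpose_mat B = 1\<^sub>m m"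
  proof -
    have Ptc: "transpose_mat P \<in> carrier_mat m n" using Pc by simp
    have "A * transpose_mat A + B * transpose_mat B
        = transpose_mat P * (U1 * transpose_mat U1) * P + transpose_mat P * (U2 * transpose_mat U2) * P"
      unfolding A_def B_def using gram_conj[OF Ptc U1] gram_conj[OF Ptc U2] by simp
    also have "\<dots> = (transpose_mat P * (U1 * transpose_mat U1) + transpose_mat P * (U2 * transpose_mat U2)) * P"
      using Ptc U1 U2 Pc by (simp add: add_mult_distrib_mat[of _ m n])
    also have "\<dots> = transpose_mat P * (U1 * transpose_mat U1 + U2 * transpose_mat U2) * P"
      using Ptc U1 U2 Pc by (simp add: mult_add_distrib_mat[of "transpose_mat P" m n _ n])
    also have "\<dots> = 1\<^sub>m m" using UU PtP Ptc by simp
    finally show ?thesis .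
  qed
  define M where "M = Ai * B"
  have Mc: "M \<in> carrier_mat m (n - m)" using Aic Bc by (simp add: M_def)
  have BBt: "B * transpose_mat B = 1\<^sub>m m - A * transpose_mat A"
  proof (rule eq_matI)
    fix i j assume ij: "i < dim_row (1\<^sub>m m - A * transpose_mat A)" "j < dim_col (1\<^sub>m m - A * transpose_mat A)"
    have "(A * transpose_mat A + B * transpose_mat B) $$ (i,j) = 1\<^sub>m m $$ (i,j)" using ABt by simp
    then show "(B * transpose_mat B) $$ (i,j) = (1\<^sub>m m - A * transpose_mat A) $$ (i,j)"
      using ij Ac Bc by simp
  qed (use Ac Bc in auto)
  have MMt: "M * transpose_mat M = Ai * transpose_mat Ai - 1\<^sub>m m"
  proof -
    have "M * transpose_mat M = Ai * (1\<^sub>m m - A * transpose_mat A) * transpose_mat Ai"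
      unfolding M_def gram_conj[OF Aic Bc] BBt ..
    also have "\<dots> = (Ai - Ai * (A * transpose_mat A)) * transpose_mat Ai"
      using Aic Ac by (simp add: mult_minus_distrib_mat[of Ai m m _ m])
    also have "\<dots> = Ai * transpose_mat Ai - Ai * (A * transpose_mat A) * transpose_mat Ai"
      using Aic Ac by (simp add: minus_mult_distrib_mat[of Ai m m _ _ m])
    also have "Ai * (A * transpose_mat A) * transpose_mat Ai = (Ai * A) * transpose_mat (Ai * A)"
      using gram_conj[OF Aic Ac] by simp
    also have "\<dots> = 1\<^sub>m m" using AiA by simp
    finally show ?thesis .
  qed
  have trG: "tr (Ai * transpose_mat Ai) = (\<Sum>i<m. 1 / (\<sigma> i)\<^sup>2)"
  proof -
    have Gc: "transpose_mat A * A \<in> carrier_mat m m" using Ac by simp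
    have Gic: "Ai * transpose_mat Ai \<in> carrier_mat m m" using Aic by simp
    have tAAi: "transpose_mat Ai * transpose_mat A = 1\<^sub>m m"
      using transpose_mult[OF Ac Aic] AAi by simp
    have "Ai * transpose_mat Ai * (transpose_mat A * A) = Ai * (transpose_mat Ai * (transpose_mat A * A))"
      by (rule assoc_mult_mat[of _ m m _ m _ m]) (use Aic Ac in auto)
    also have "transpose_mat Ai * (transpose_mat A * A) = (transpose_mat Ai * transpose_mat A) * A"
      by (rule assoc_mult_mat[of _ m m _ m _ m, symmetric]) (use Aic Ac in auto)
    finally have GiG: "Ai * transpose_mat Ai * (transpose_mat A * A) = 1\<^sub>m m"
      using tAAi AiA Ac by simp
    have cp: "char_poly (transpose_mat A * A) = (\<Prod>i<m. [:- (\<lambda>i. (\<sigma> i)\<^sup>2) i, 1:])"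
      using sv unfolding singular_values_def A_def by simp
    show ?thesis
      using tr_inv_char_poly[OF Gc Gic GiG cp] sv_pos by (simp add: order_less_imp_not_eq2)
  qed
  define SS where "SS = (\<Sum>i<m. (1 - (\<sigma> i)\<^sup>2) / (\<sigma> i)\<^sup>2)"
  have trM: "tr (M * transpose_mat M) = SS"
  proof -
    have "tr (M * transpose_mat M) = tr (Ai * transpose_mat Ai) - tr (1\<^sub>m m)"
      unfolding MMt using Aic by (simp add: tr_def sum_subtractf)
    also have "tr (1\<^sub>m m) = (\<Sum>i<m. 1)" by (simp add: tr_def)
    finally have "tr (M * transpose_mat M) = (\<Sum>i<m. 1 / (\<sigma> i)\<^sup>2 - 1)"
      using trG by (simp add: sum_subtractf)
    also have "\<dots> = SS" unfolding SS_def
      by (rule sum.cong) (use sv_pos in \<open>auto simp: field_simps\<close>)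
    finally show ?thesis .
  qed
  show ?thesis (is "\<forall>\<mu>\<in>S. ?P \<mu>")
  proof
    fix \<mu> assume \<mu>: "\<mu> \<in> S"
    define x where "x = f \<mu>"
    have xc: "x \<in> carrier_vec n" using f_dim \<mu> by (simp add: x_def)
    define a where "a = transpose_mat U1 *\<^sub>v x"
    define b where "b = transpose_mat U2 *\<^sub>v x"
    have ac: "a \<in> carrier_vec m" using U1 xc by (simp add: a_def)
    have bc: "b \<in> carrier_vec (n - m)" using U2 xc by (simp add: b_def)
    have Mbc: "M *\<^sub>v b \<in> carrier_vec m" using Mc bc by simp
    have U1a: "(U1 * transpose_mat U1) *\<^sub>v x = U1 *\<^sub>v a"
      unfolding a_def using U1 xc by (simp add: assoc_mult_mat_vec[of _ n m _ n])
    have U2b: "(U2 * transpose_mat U2) *\<^sub>v x = U2 *\<^sub>v b"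
      unfolding b_def using U2 xc by (simp add: assoc_mult_mat_vec[of _ n "n-m" _ n])
    have xdec: "x = U1 *\<^sub>v a + U2 *\<^sub>v b"
    proof -
      have "x = (U1 * transpose_mat U1 + U2 * transpose_mat U2) *\<^sub>v x" using UU xc by simp
      also have "\<dots> = (U1 * transpose_mat U1) *\<^sub>v x + (U2 * transpose_mat U2) *\<^sub>v x"
        using U1 U2 xc by (simp add: add_mult_distrib_mat_vec[of _ n n])
      finally show ?thesis using U1a U2b by simp
    qed
    have Ptx: "transpose_mat P *\<^sub>v x = A *\<^sub>v a + B *\<^sub>v b"
    proof -
      have "transpose_mat P *\<^sub>v x = transpose_mat P *\<^sub>v (U1 *\<^sub>v a) + transpose_mat P *\<^sub>v (U2 *\<^sub>v b)"
        using xdec Pc U1 U2 ac bc by (metis mult_add_distrib_mat_vec mult_mat_vec_carrier transpose_carrier_mat)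
      then show ?thesis unfolding A_def B_def using Pc U1 U2 ac bc
        by (simp add: assoc_mult_mat_vec[of _ m n _ m] assoc_mult_mat_vec[of _ m n _ "n-m"])
    qed
    have Aix: "Ai *\<^sub>v (transpose_mat P *\<^sub>v x) = a + M *\<^sub>v b"
    proof -
      have "Ai *\<^sub>v (transpose_mat P *\<^sub>v x) = Ai *\<^sub>v (A *\<^sub>v a) + Ai *\<^sub>v (B *\<^sub>v b)"
        unfolding Ptx using Aic Ac Bc ac bc by (simp add: mult_add_distrib_mat_vec[of _ m m])
      also have "Ai *\<^sub>v (A *\<^sub>v a) = a" using Aic Ac ac AiA
        by (simp flip: assoc_mult_mat_vec[of _ m m _ m])
      also have "Ai *\<^sub>v (B *\<^sub>v b) = M *\<^sub>v b" using Aic Bc bc unfolding M_def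
        by (simp add: assoc_mult_mat_vec[of _ m m _ "n-m"])
      finally show ?thesis .
    qed
    have ft_eq: "U1 * minv (transpose_mat P * U1) * transpose_mat P *\<^sub>v f \<mu> = U1 *\<^sub>v a + U1 *\<^sub>v (M *\<^sub>v b)"
    proof -
      have "U1 * minv (transpose_mat P * U1) * transpose_mat P *\<^sub>v f \<mu> = U1 *\<^sub>v (Ai *\<^sub>v (transpose_mat P *\<^sub>v x))"
        unfolding x_def[symmetric] Ai_def[symmetric] A_def[symmetric] using U1 Aic Pc xc
        by (simp add: assoc_mult_mat_vec[of _ n m _ n] assoc_mult_mat_vec[of _ m m _ n])
      also have "\<dots> = U1 *\<^sub>v a + U1 *\<^sub>v (M *\<^sub>v b)" unfolding Aix
        using U1 ac Mbc by (simp add: mult_add_distrib_mat_vec[of _ n m])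
      finally show ?thesis .
    qed
    have fh_eq: "U1 * transpose_mat U1 *\<^sub>v f \<mu> = U1 *\<^sub>v a" using U1a x_def by simp
    have r_eq: "sqnorm ((1\<^sub>m n - U1 * transpose_mat U1) *\<^sub>v f \<mu>) = sqnorm b"
    proof -
      have "1\<^sub>m n - U1 * transpose_mat U1 = U2 * transpose_mat U2"
      proof (rule eq_matI)
        fix i j assume ij: "i < dim_row (U2 * transpose_mat U2)" "j < dim_col (U2 * transpose_mat U2)"
        have "(U1 * transpose_mat U1 + U2 * transpose_mat U2) $$ (i,j) = 1\<^sub>m n $$ (i,j)" using UU by simp
        then show "(1\<^sub>m n - U1 * transpose_mat U1) $$ (i,j) = (U2 * transpose_mat U2) $$ (i,j)"
          using ij U1 U2 by simp
      qed (use U1 U2 in auto)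
      then show ?thesis using U2b sqnorm_isom[OF U2 o2 bc] x_def by simp
    qed
    have orth: "(U2 *\<^sub>v b) \<bullet> (U1 *\<^sub>v c) = 0" if c: "c \<in> carrier_vec m" for c
    proof -
      have "(transpose_mat U1 *\<^sub>v (U2 *\<^sub>v b)) \<bullet> c = (U2 *\<^sub>v b) \<bullet> (U1 *\<^sub>v c)"
        using transpose_vec_mult_scalar[OF U1 c, of "U2 *\<^sub>v b"] U2 bc by simp
      moreover have "transpose_mat U1 *\<^sub>v (U2 *\<^sub>v b) = 0\<^sub>v m"
      proof -
        have "transpose_mat U1 *\<^sub>v (U2 *\<^sub>v b) = 0\<^sub>m m (n - m) *\<^sub>v b"
          using o12 U1 U2 bc by (simp flip: assoc_mult_mat_vec[of _ m n _ "n-m"])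
        also have "\<dots> = 0\<^sub>v m" by (rule eq_vecI) (use bc in \<open>auto simp: scalar_prod_def\<close>)
        finally show ?thesis .
      qed
      ultimately show ?thesis using c by simp
    qed
    have diff1: "f \<mu> - (U1 *\<^sub>v a + U1 *\<^sub>v (M *\<^sub>v b)) = U2 *\<^sub>v b - U1 *\<^sub>v (M *\<^sub>v b)"
      unfolding x_def[symmetric] xdec by (rule eq_vecI) (use U1 U2 ac bc Mbc in auto)
    have diff2: "U1 *\<^sub>v a + U1 *\<^sub>v (M *\<^sub>v b) - U1 *\<^sub>v a = U1 *\<^sub>v (M *\<^sub>v b)"
      by (rule eq_vecI) (use U1 U2 ac bc Mbc in auto)
    have nMb: "sqnorm (U1 *\<^sub>v (M *\<^sub>v b)) = sqnorm (M *\<^sub>v b)"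
      by (rule sqnorm_isom[OF U1 o1 Mbc])
    have part1: "sqnorm (U2 *\<^sub>v b - U1 *\<^sub>v (M *\<^sub>v b)) \<le> (1 + SS) * sqnorm b"
    proof -
      have "sqnorm (U2 *\<^sub>v b - U1 *\<^sub>v (M *\<^sub>v b)) = sqnorm b + sqnorm (M *\<^sub>v b)"
        using sqnorm_diff_orth[of "U2 *\<^sub>v b" n "U1 *\<^sub>v (M *\<^sub>v b)"] orth[OF Mbc] U1 U2 bc Mbc
          nMb sqnorm_isom[OF U2 o2 bc] by simp
      also have "\<dots> \<le> sqnorm b + SS * sqnorm b"
        using frob[OF Mc bc] trM by simp
      finally show ?thesis by (simp add: algebra_simps)
    qed
    have part2: "sqnorm (M *\<^sub>v b) = (\<Sum>i<m. (1 - (\<sigma> i)\<^sup>2) / (\<sigma> i)\<^sup>2 * (y $ i)\<^sup>2)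
         \<and> (\<Sum>i<m. (1 - (\<sigma> i)\<^sup>2) / (\<sigma> i)\<^sup>2 * (y $ i)\<^sup>2) \<le> SS * sqnorm b"
      if Z: "orthogonal_mat m Z1 \<and> orthogonal_mat m V1 \<and> orthogonal_mat (n - m) V2
            \<and> transpose_mat P * U1
                = Z1 * mat m m (\<lambda>(i, j). if i = j then \<sigma> i else 0) * transpose_mat V1
            \<and> transpose_mat P * U2
                = Z1 * mat m (n - m) (\<lambda>(i, j). if i = j then sqrt (1 - (\<sigma> i)\<^sup>2) else 0)
                     * transpose_mat V2"
        and y: "y = transpose_mat V2 * transpose_mat U2 *\<^sub>v f \<mu>"
      for Z1 V1 V2 y
    proof -
      define D where "D = mat m m (\<lambda>(i, j). if i = j then \<sigma> i else 0)"
      define C where "C = mat m (n - m) (\<lambda>(i, j). if i = j then sqrt (1 - (\<sigma> i)\<^sup>2) else 0)"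
      define E where "E = mat m (n - m) (\<lambda>(i, j). if i = j then sqrt (1 - (\<sigma> i)\<^sup>2) / \<sigma> i else 0)"
      have Z1c: "Z1 \<in> carrier_mat m m" and V1c: "V1 \<in> carrier_mat m m" and V2c: "V2 \<in> carrier_mat (n-m) (n-m)"
        and tZ: "transpose_mat Z1 * Z1 = 1\<^sub>m m" and tV1: "transpose_mat V1 * V1 = 1\<^sub>m m"
        and tV2: "transpose_mat V2 * V2 = 1\<^sub>m (n-m)"
        using Z unfolding orthogonal_mat_def by auto
      have hA: "A = Z1 * D * transpose_mat V1" using Z unfolding A_def D_def by simp
      have hB: "B = Z1 * C * transpose_mat V2" using Z unfolding B_def C_def by simp
      have Dc: "D \<in> carrier_mat m m" and Cc: "C \<in> carrier_mat m (n-m)" and Ec: "E \<in> carrier_mat m (n-m)"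
        by (auto simp: D_def C_def E_def)
      have mm: "m \<le> n - m" using mn by simp
      have yb: "y = transpose_mat V2 *\<^sub>v b"
        unfolding y b_def x_def[symmetric] using V2c U2 xc
        by (simp add: assoc_mult_mat_vec[of _ "n-m" "n-m" _ n])
      have yc: "y \<in> carrier_vec (n-m)" using yb V2c bc by simp
      have Av: "A *\<^sub>v v = Z1 *\<^sub>v (D *\<^sub>v (transpose_mat V1 *\<^sub>v v))" if v: "v \<in> carrier_vec m" for v
        unfolding hA using Z1c Dc V1c v
        by (simp add: assoc_mult_mat_vec[of _ m m _ m])
      have Bb: "B *\<^sub>v b = Z1 *\<^sub>v (C *\<^sub>v y)"
        unfolding hB yb using Z1c Cc V2c bc
        by (simp add: assoc_mult_mat_vec[of _ m m _ "n-m"] assoc_mult_mat_vec[of _ m "n-m" _ "n-m"])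
      have Eyc: "E *\<^sub>v y \<in> carrier_vec m" using Ec yc by simp
      have Ey: "E *\<^sub>v y = vec m (\<lambda>i. sqrt (1 - (\<sigma> i)\<^sup>2) / \<sigma> i * y $ i)"
        unfolding E_def by (rule diag_mult_vec[OF mm yc])
      have CDE: "C *\<^sub>v y = D *\<^sub>v (E *\<^sub>v y)"
        unfolding Ey C_def D_def
        using diag_mult_vec[OF mm yc] diag_mult_vec[of m m "vec m (\<lambda>i. sqrt (1 - (\<sigma> i)\<^sup>2) / \<sigma> i * y $ i)"] sv_pos
        by (auto intro!: eq_vecI)
      define w where "w = V1 *\<^sub>v (E *\<^sub>v y)"
      have wc: "w \<in> carrier_vec m" using V1c Eyc by (simp add: w_def)
      have V1V1: "transpose_mat V1 *\<^sub>v (V1 *\<^sub>v v) = v" if "v \<in> carrier_vec m" for v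
        using that V1c tV1 by (simp flip: assoc_mult_mat_vec[of _ m m _ m])
      have Aw: "A *\<^sub>v w = B *\<^sub>v b"
      proof -
        have "A *\<^sub>v w = Z1 *\<^sub>v (D *\<^sub>v (transpose_mat V1 *\<^sub>v w))" by (rule Av[OF wc])
        also have "transpose_mat V1 *\<^sub>v w = E *\<^sub>v y" using V1V1[OF Eyc] w_def by simp
        also have "Z1 *\<^sub>v (D *\<^sub>v (E *\<^sub>v y)) = B *\<^sub>v b" using Bb CDE by simp
        finally show ?thesis .
      qed
      have Mbw: "M *\<^sub>v b = w"
      proof -
        have "M *\<^sub>v b = Ai *\<^sub>v (A *\<^sub>v w)" unfolding Aw M_def using Aic Bc bc
          by (simp add: assoc_mult_mat_vec[of _ m m _ "n-m"])
        also have "\<dots> = w" using Aic Ac wc AiA by (simp flip: assoc_mult_mat_vec[of _ m m _ m])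
        finally show ?thesis .
      qed
      have sle: "\<sigma> i \<le> 1" if i: "i < m" for i
      proof -
        define v where "v = V1 *\<^sub>v unit_vec m i"
        have vc: "v \<in> carrier_vec m" using V1c by (simp add: v_def)
        have "sqnorm v = sqnorm (unit_vec m i :: real vec)"
          unfolding v_def by (rule sqnorm_isom[OF V1c tV1]) simp
        also have "\<dots> = (\<Sum>k<m. if k = i then 1 else 0)"
          unfolding sqnorm_def by (rule sum.cong) (auto simp: unit_vec_def)
        also have "\<dots> = 1" using i by simp
        finally have nv: "sqnorm v = 1" .
        have "A *\<^sub>v v = Z1 *\<^sub>v (D *\<^sub>v unit_vec m i)"
        proof -
          have "A *\<^sub>v v = Z1 *\<^sub>v (D *\<^sub>v (transpose_mat V1 *\<^sub>v v))" by (rule Av[OF vc])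
          also have "transpose_mat V1 *\<^sub>v v = unit_vec m i" using V1V1[OF unit_vec_carrier] v_def by simp
          finally show ?thesis .
        qed
        then have "sqnorm (A *\<^sub>v v) = sqnorm (D *\<^sub>v unit_vec m i)"
          using sqnorm_isom[OF Z1c tZ, of "D *\<^sub>v unit_vec m i"] Dc by simp
        also have "D *\<^sub>v unit_vec m i = vec m (\<lambda>k. \<sigma> k * unit_vec m i $ k)"
          unfolding D_def by (rule diag_mult_vec) auto
        also have "sqnorm \<dots> = (\<sigma> i)\<^sup>2"
        proof -
          have "sqnorm (vec m (\<lambda>k. \<sigma> k * unit_vec m i $ k)) = (\<Sum>k<m. if k = i then (\<sigma> i)\<^sup>2 else 0)"
            unfolding sqnorm_def by (rule sum.cong) (auto simp: unit_vec_def)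
          then show ?thesis using i by simp
        qed
        finally have "(\<sigma> i)\<^sup>2 = sqnorm (A *\<^sub>v v)" by simp
        also have "A *\<^sub>v v = transpose_mat P *\<^sub>v (U1 *\<^sub>v v)"
          unfolding A_def using Pc U1 vc by (simp add: assoc_mult_mat_vec[of _ m n _ m])
        also have "sqnorm \<dots> \<le> sqnorm (U1 *\<^sub>v v)"
          by (rule sel_contract[OF P]) (use U1 vc in simp)
        also have "\<dots> = 1" using sqnorm_isom[OF U1 o1 vc] nv by simp
        finally have "(\<sigma> i)\<^sup>2 \<le> 1" .
        then show ?thesis using abs_square_le_1[of "\<sigma> i"] by simp
      qed
      have eq: "sqnorm (M *\<^sub>v b) = (\<Sum>i<m. (1 - (\<sigma> i)\<^sup>2) / (\<sigma> i)\<^sup>2 * (y $ i)\<^sup>2)"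
      proof -
        have "sqnorm (M *\<^sub>v b) = sqnorm (E *\<^sub>v y)"
          unfolding Mbw w_def by (rule sqnorm_isom[OF V1c tV1 Eyc])
        also have "\<dots> = (\<Sum>i<m. (sqrt (1 - (\<sigma> i)\<^sup>2) / \<sigma> i * y $ i)\<^sup>2)"
          unfolding Ey sqnorm_def by simp
        also have "\<dots> = (\<Sum>i<m. (1 - (\<sigma> i)\<^sup>2) / (\<sigma> i)\<^sup>2 * (y $ i)\<^sup>2)"
        proof (rule sum.cong)
          fix i assume "i \<in> {..<m}"
          then have i: "i < m" by simp
          have "0 \<le> 1 - (\<sigma> i)\<^sup>2" using sle[OF i] sv_pos i abs_square_le_1[of "\<sigma> i"] by (auto simp: abs_le_iff)
          then show "(sqrt (1 - (\<sigma> i)\<^sup>2) / \<sigma> i * y $ i)\<^sup>2 = (1 - (\<sigma> i)\<^sup>2) / (\<sigma> i)\<^sup>2 * (y $ i)\<^sup>2"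
            by (simp add: power_mult_distrib power_divide)
        qed simp
        finally show ?thesis .
      qed
      have ny: "sqnorm y = sqnorm b"
      proof -
        have "V2 * transpose_mat V2 = 1\<^sub>m (n-m)"
          using mat_mult_left_right_inverse[OF _ V2c tV2] V2c by simp
        then have "transpose_mat (transpose_mat V2) * transpose_mat V2 = 1\<^sub>m (n-m)" by simp
        from sqnorm_isom[OF _ this bc] V2c show ?thesis unfolding yb by simp
      qed
      have ineq: "(\<Sum>i<m. (1 - (\<sigma> i)\<^sup>2) / (\<sigma> i)\<^sup>2 * (y $ i)\<^sup>2) \<le> SS * sqnorm b"
      proof -
        have "(\<Sum>i<m. (1 - (\<sigma> i)\<^sup>2) / (\<sigma> i)\<^sup>2 * (y $ i)\<^sup>2)
            \<le> (\<Sum>i<m. (1 - (\<sigma> i)\<^sup>2) / (\<sigma> i)\<^sup>2 * sqnorm b)"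
        proof (rule sum_mono)
          fix i assume "i \<in> {..<m}"
          then have i: "i < m" by simp
          have "0 \<le> 1 - (\<sigma> i)\<^sup>2" using sle[OF i] sv_pos i abs_square_le_1[of "\<sigma> i"] by (auto simp: abs_le_iff)
          then have wn: "0 \<le> (1 - (\<sigma> i)\<^sup>2) / (\<sigma> i)\<^sup>2" by simp
          have "(y $ i)\<^sup>2 \<le> (\<Sum>k<n-m. (y $ k)\<^sup>2)"
            by (rule member_le_sum) (use i mm in auto)
          also have "\<dots> = sqnorm b" using ny yc by (simp add: sqnorm_def)
          finally show "(1 - (\<sigma> i)\<^sup>2) / (\<sigma> i)\<^sup>2 * (y $ i)\<^sup>2 \<le> (1 - (\<sigma> i)\<^sup>2) / (\<sigma> i)\<^sup>2 * sqnorm b"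
            by (rule mult_left_mono[OF _ wn])
        qed
        also have "\<dots> = SS * sqnorm b" unfolding SS_def by (simp add: sum_distrib_right)
        finally show ?thesis .
      qed
      show ?thesis using eq ineq by simp
    qed
    show "?P \<mu>"
      unfolding Let_def ft_eq fh_eq r_eq diff1 diff2 nMb
      using part1 part2 unfolding SS_def by blast
  qed
qed

end
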